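(* Let $M(z)=\frac{1-z-\sqrt{1-2z-3z^2}}{2z^2}$ be the Motzkin generating function and let $v=v(z)=zM(z)$, so that $v$ is the power series with $v(0)=0$ satisfying $z=\frac{v}{1+v+v^2}$. Define formal power series $G_k(z)$, $k\ge1$, by $G_1=z$ and $$G_{k+1}=\frac{z}{1-\dfrac{zG_k}{1-G_k}}\qquad (k\ge1),$$ and set $F_k=\frac{zG_k}{1-G_k}$. Then for all $k\ge1$, $$G_k=\frac{v}{1+v}\cdot\frac{1-v^{2k}}{1-v^{2k+1}},\qquad F_k=\frac{v^2}{1+v+v^2}\cdot\frac{1-v^{2k}}{1-v^{2k+2}}.$$ Moreover, $F_k$ is the generating function, by number of nodes, of plane trees with at least two nodes in which every leaf lies at odd depth and whose height (maximal depth of a node) is at most $2k-1$.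
   Context: Plane trees are ordered rooted trees; depth of the root is $0$; the height of a tree is the maximal depth of its nodes (number of edges on a longest root-to-node path). Power series are in the variable $z$ marking the number of nodes. *)

theory Defs
  imports "HOL-Computational_Algebra.Formal_Power_Series"
begin

definition vser :: "real fps" where
  "vser = (THE v. fps_nth v 0 = 0 \<and> fps_X = v / (1 + v + v\<^sup>2))"

text \<open>G_1 = z, G_{k+1} = z / (1 - z G_k/(1 - G_k)); G 0 is an unused filler value.\<close>
fun Gser :: "nat \<Rightarrow> real fps" where
  "Gser 0 = 0"
| "Gser (Suc 0) = fps_X"
| "Gser (Suc (Suc k)) = fps_X / (1 - fps_X * Gser (Suc k) / (1 - Gser (Suc k)))"

definition Fser :: "nat \<Rightarrow> real fps" where
  "Fser k = fps_X * Gser k / (1 - Gser k)"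

datatype ptree = Node "ptree list"

fun nodes :: "ptree \<Rightarrow> nat" where
  "nodes (Node ts) = Suc (sum_list (map nodes ts))"

fun height :: "ptree \<Rightarrow> nat" where
  "height (Node ts) = (if ts = [] then 0 else Suc (Max (set (map height ts))))"

fun odd_leaves :: "nat \<Rightarrow> ptree \<Rightarrow> bool" where
  "odd_leaves d (Node ts) = (if ts = [] then odd d else list_all (odd_leaves (Suc d)) ts)"

end

theory Submission
  imports Defs "HOL-Computational_Algebra.Formal_Laurent_Series"
begin
definition aser :: "real fps" where "aser = fps_X / (1 + fps_X + fps_X\<^sup>2)"

lemma aser_comp:
  fixes v :: "real fps" assumes v0: "v $ 0 = 0"
  shows "aser oo v = v / (1 + v + v\<^sup>2)"
proof -
  have p0: "(1 + fps_X + fps_X\<^sup>2 :: real fps) $ 0 \<noteq> 0" by (simp add: power2_eq_square)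
  have q0: "(1 + v + v\<^sup>2) $ 0 \<noteq> 0" using v0 by (simp add: power2_eq_square)
  have ae: "aser = fps_X * inverse (1 + fps_X + fps_X\<^sup>2)"
    unfolding aser_def using p0 by (simp add: fps_divide_unit)
  have "aser oo v = (fps_X oo v) * (inverse (1 + fps_X + fps_X\<^sup>2) oo v)"
    unfolding ae by (rule fps_compose_mult_distrib[OF v0])
  also have "\<dots> = v * inverse ((1 + fps_X + fps_X\<^sup>2) oo v)"
    using v0 p0 by (simp add: fps_inverse_compose)
  also have "(1 + fps_X + fps_X\<^sup>2) oo v = 1 + v + v\<^sup>2"
    using v0 by (simp add: fps_compose_add_distrib fps_X_power_compose)
  finally show ?thesis using q0 by (simp add: fps_divide_unit)
qed

lemma aser0: "aser $ 0 = 0" and aser1: "aser $ 1 = 1"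
proof -
  have p0: "(1 + fps_X + fps_X\<^sup>2 :: real fps) $ 0 = 1" by (simp add: power2_eq_square)
  have ae: "aser = fps_X * inverse (1 + fps_X + fps_X\<^sup>2)"
    unfolding aser_def using p0 by (simp add: fps_divide_unit)
  show "aser $ 0 = 0" "aser $ 1 = 1" using p0 by (simp_all add: ae)
qed

lemma vser_props: "vser $ 0 = 0 \<and> fps_X = vser / (1 + vser + vser\<^sup>2)"
proof -
  let ?w = "fps_inv aser"
  have w0: "?w $ 0 = 0" by (simp add: fps_inv_def)
  have ex: "?w $ 0 = 0 \<and> fps_X = ?w / (1 + ?w + ?w\<^sup>2)"
    using w0 aser_comp[OF w0] fps_inv_right[OF aser0] aser1 by simp
  have un: "v = ?w" if "v $ 0 = 0 \<and> fps_X = v / (1 + v + v\<^sup>2)" for v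
  proof -
    from that have v0: "v $ 0 = 0" and e: "aser oo v = fps_X" using aser_comp by auto
    have "?w = ?w oo (aser oo v)" using e by simp
    also have "\<dots> = (?w oo aser) oo v" using v0 aser0 by (simp add: fps_compose_assoc)
    also have "\<dots> = v" using fps_inv[OF aser0] aser1 v0 by simp
    finally show ?thesis by simp
  qed
  show ?thesis unfolding vser_def
    by (rule theI[of _ ?w]) (use ex un in blast)+
qed


lemma alg_step:
  fixes v x g p a b c1 c2 c3 :: "'a::field"
  assumes na: "a \<noteq> 0" and nb: "b \<noteq> 0" and n1: "c1 \<noteq> 0" and n2: "c2 \<noteq> 0" and n3: "c3 \<noteq> 0"
    and ha: "a = 1 + v" and hb: "b = 1 + v + v\<^sup>2" and h1: "c1 = 1 - v*p"
    and h2: "c2 = 1 - v\<^sup>2*p" and h3: "c3 = 1 - v^3*p"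
    and x: "x = v/b" and g: "g = v/a*((1-p)/c1)"
  shows "1 - g = c2/(a*c1)"
    and "x*g/(1-g) = v\<^sup>2/b*((1-p)/c2)"
    and "x/(1 - x*g/(1-g)) = v/a*(c2/c3)"
proof -
  have e1: "a*c1 - v*(1-p) = c2" unfolding ha h1 h2 by (simp add: algebra_simps power2_eq_square)
  show g1: "1 - g = c2/(a*c1)"
    unfolding g using na n1 e1 by (simp add: field_simps)
  show f: "x*g/(1-g) = v\<^sup>2/b*((1-p)/c2)"
    unfolding g1 unfolding x g using na nb n1 n2 by (simp add: field_simps power2_eq_square)
  have e2: "b*c2 - v\<^sup>2*(1-p) = a*c3" unfolding ha hb h2 h3 by (simp add: algebra_simps power2_eq_square power3_eq_cube)
  have "1 - v\<^sup>2/b*((1-p)/c2) = a*c3/(b*c2)"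
    using nb n2 e2 by (simp add: field_simps)
  then show "x/(1 - x*g/(1-g)) = v/a*(c2/c3)"
    unfolding f unfolding x using na nb n2 n3 by (simp add: field_simps)
qed

lemma phi_div: "(g :: real fps) $ 0 \<noteq> 0 \<Longrightarrow> fps_to_fls (f/g) = fps_to_fls f / fps_to_fls g"
  by (rule fls_divide_fps_to_fls[symmetric]) simp

lemma phi_nz: "(g :: real fps) $ 0 \<noteq> 0 \<Longrightarrow> fps_to_fls g \<noteq> 0"
  by (metis fps_nonzeroI fps_to_fls_eq_0_iff)

lemma vser0[simp]: "vser $ 0 = 0" using vser_props by simp

lemma Gser0[simp]: "Gser (Suc k) $ 0 = 0"
proof (induction k)
  case 0 then show ?case by simp
next
  case (Suc k)
  let ?D = "1 - fps_X * Gser (Suc k) / (1 - Gser (Suc k))"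
  have "?D $ 0 = 1" using Suc by (simp add: fps_divide_unit)
  then show ?case by (simp add: fps_divide_unit)
qed

lemma Fser0[simp]: "Fser (Suc k) $ 0 = 0"
  by (simp add: Fser_def fps_divide_unit)

lemma Gser_SS: "Gser (Suc (Suc k)) = fps_X / (1 - Fser (Suc k))"
  by (simp add: Fser_def)

abbreviation "V \<equiv> fps_to_fls vser"

lemma pow_nz: "n > 0 \<Longrightarrow> 1 - V ^ n \<noteq> 0"
  using phi_nz[of "1 - vser^n"] by (simp add: fps_to_fls_power fps_nth_power_0 zero_power)

lemma onev_nz: "1 + V \<noteq> 0" using phi_nz[of "1 + vser"] by simp
lemma twov_nz: "1 + V + V\<^sup>2 \<noteq> 0" using phi_nz[of "1 + vser + vser\<^sup>2"]
  by (simp add: fps_to_fls_power fps_nth_power_0)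

lemma X_fls: "fps_to_fls fps_X = V / (1 + V + V\<^sup>2)"
proof -
  have "fps_to_fls fps_X = fps_to_fls (vser / (1 + vser + vser\<^sup>2))" using vser_props by simp
  also have "\<dots> = V / (1 + V + V\<^sup>2)"
    by (subst phi_div) (simp_all add: fps_to_fls_power fps_nth_power_0)
  finally show ?thesis .
qed

lemma F_from_G: "fps_to_fls (Fser (Suc m)) =
   fps_to_fls fps_X * fps_to_fls (Gser (Suc m)) / (1 - fps_to_fls (Gser (Suc m)))"
  unfolding Fser_def by (subst phi_div) (simp_all add: fls_times_fps_to_fls)

lemma G_fls: "fps_to_fls (Gser (Suc m)) = V/(1+V)*((1-V^(2*Suc m))/(1-V^(2*Suc m+1)))"
proof (induction m)
  case 0
  have n1: "1 - V \<noteq> 0" using pow_nz[of 1] by simp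
  have "V/(1+V)*((1-V^2)/(1-V^3)) = V/(1+V+V\<^sup>2)"
  proof -
    have e1: "1-V^2 = (1-V)*(1+V)" by (simp add: algebra_simps power2_eq_square)
    have e2: "1-V^3 = (1-V)*(1+V+V\<^sup>2)" by (simp add: algebra_simps power2_eq_square power3_eq_cube)
    have gen: "v/a*((c*a)/(c*b)) = v/b" if "a \<noteq> 0" "c \<noteq> 0" "b \<noteq> 0" for v a b c :: "real fls"
      using that by (simp add: field_simps)
    show ?thesis unfolding e1 e2 using gen[OF onev_nz n1 twov_nz] by (simp add: mult.commute)
  qed
  then show ?case using X_fls by (simp add: numeral_eq_Suc)
next
  case (Suc m)
  have hc1: "1 - V^(2*Suc m+1) = 1 - V*V^(2*Suc m)" by simp
  have hc2: "1 - V^(2*Suc m+2) = 1 - V\<^sup>2*V^(2*Suc m)" by (simp add: power_add power2_eq_square)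
  have hc3: "1 - V^(2*Suc m+3) = 1 - V^3*V^(2*Suc m)" by (metis power_add add.commute)
  note A = alg_step[OF onev_nz twov_nz pow_nz pow_nz pow_nz refl refl hc1 hc2 hc3 X_fls Suc.IH]
  have s3: "fps_to_fls fps_X / (1 - fps_to_fls fps_X * fps_to_fls (Gser (Suc m)) / (1 - fps_to_fls (Gser (Suc m))))
        = V/(1+V)*((1-V^(2*Suc m+2))/(1-V^(2*Suc m+3)))"
    using A(3) by simp
  have "fps_to_fls (Gser (Suc (Suc m))) = fps_to_fls fps_X / (1 - fps_to_fls (Fser (Suc m)))"
    unfolding Gser_SS by (subst phi_div) simp_all
  also have "\<dots> = V/(1+V)*((1-V^(2*Suc m+2))/(1-V^(2*Suc m+3)))"
    unfolding F_from_G by (rule s3)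
  finally have c: "fps_to_fls (Gser (Suc (Suc m))) = V/(1+V)*((1-V^(2*Suc m+2))/(1-V^(2*Suc m+3)))" .
  have e: "2*Suc m+2 = 2*Suc(Suc m)" "2*Suc m+3 = 2*Suc(Suc m)+1" by simp_all
  show ?case using c unfolding e .
qed

lemma F_fls: "fps_to_fls (Fser (Suc m)) = V\<^sup>2/(1+V+V\<^sup>2)*((1-V^(2*Suc m))/(1-V^(2*Suc m+2)))"
proof -
  have hc1: "1 - V^(2*Suc m+1) = 1 - V*V^(2*Suc m)" by simp
  have hc2: "1 - V^(2*Suc m+2) = 1 - V\<^sup>2*V^(2*Suc m)" by (simp add: power_add power2_eq_square)
  have hc3: "1 - V^(2*Suc m+3) = 1 - V^3*V^(2*Suc m)" by (metis power_add add.commute)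
  note A = alg_step[OF onev_nz twov_nz pow_nz pow_nz pow_nz refl refl hc1 hc2 hc3 X_fls G_fls]
  show ?thesis unfolding F_from_G by (rule A(2)) simp_all
qed

lemma phi_div2: "(b::real fps) $ 0 \<noteq> 0 \<Longrightarrow> d $ 0 \<noteq> 0 \<Longrightarrow>
   fps_to_fls (a/b*(c/d)) = fps_to_fls a/fps_to_fls b*(fps_to_fls c/fps_to_fls d)"
  by (simp add: phi_div fls_times_fps_to_fls)

lemma G_formula: "Gser (Suc m) = vser/(1+vser)*((1-vser^(2*Suc m))/(1-vser^(2*Suc m+1)))"
proof -
  have "fps_to_fls (vser/(1+vser)*((1-vser^(2*Suc m))/(1-vser^(2*Suc m+1))))
      = V/(1+V)*((1-V^(2*Suc m))/(1-V^(2*Suc m+1)))"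
    by (subst phi_div2) (simp_all only: fps_to_fls_power fps_to_fls_plus fps_to_fls_minus fps_one_to_fls,
        simp_all add: fps_nth_power_0 zero_power power2_eq_square)
  then have "fps_to_fls (Gser (Suc m)) = fps_to_fls (vser/(1+vser)*((1-vser^(2*Suc m))/(1-vser^(2*Suc m+1))))"
    using G_fls[of m] by metis
  then show ?thesis by (simp only: fps_to_fls_eq_iff)
qed

lemma F_formula: "Fser (Suc m) = vser\<^sup>2/(1+vser+vser\<^sup>2)*((1-vser^(2*Suc m))/(1-vser^(2*Suc m+2)))"
proof -
  have "fps_to_fls (vser\<^sup>2/(1+vser+vser\<^sup>2)*((1-vser^(2*Suc m))/(1-vser^(2*Suc m+2))))
      = V\<^sup>2/(1+V+V\<^sup>2)*((1-V^(2*Suc m))/(1-V^(2*Suc m+2)))"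
    by (subst phi_div2) (simp_all only: fps_to_fls_power fps_to_fls_plus fps_to_fls_minus fps_one_to_fls,
        simp_all add: fps_nth_power_0 zero_power power2_eq_square)
  then have "fps_to_fls (Fser (Suc m)) = fps_to_fls (vser\<^sup>2/(1+vser+vser\<^sup>2)*((1-vser^(2*Suc m))/(1-vser^(2*Suc m+2))))"
    using F_fls[of m] by metis
  then show ?thesis by (simp only: fps_to_fls_eq_iff)
qed

lemma nodes_pos: "nodes t > 0" by (cases t) simp
lemma nodes_nz[simp]: "nodes t \<noteq> 0" by (cases t) simp

lemma length_le_sum: "length ts \<le> sum_list (map nodes ts)"
proof (induction ts)
  case (Cons a ts)
  have "nodes a \<ge> 1" using nodes_pos[of a] by simp
  with Cons show ?case by simp
qed simp

lemma fin_le: "finite {t. nodes t \<le> n}"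
proof (induction n)
  case 0 then show ?case by simp
next
  case (Suc n)
  have "{t. nodes t \<le> Suc n} \<subseteq> Node ` {ts. set ts \<subseteq> {t. nodes t \<le> n} \<and> length ts \<le> n}"
  proof
    fix t assume "t \<in> {t. nodes t \<le> Suc n}"
    then obtain ts where t: "t = Node ts" and s: "sum_list (map nodes ts) \<le> n" by (cases t) auto
    have "set ts \<subseteq> {t. nodes t \<le> n}"
      using s member_le_sum_list[of _ "map nodes ts"] by fastforce
    moreover have "length ts \<le> n" using s length_le_sum[of ts] by simp
    ultimately show "t \<in> Node ` {ts. set ts \<subseteq> {t. nodes t \<le> n} \<and> length ts \<le> n}" using t by blast
  qed
  then show ?case using finite_lists_length_le[OF Suc.IH] finite_subset by blast
qed

lemma fin_eq: "finite {t \<in> S. nodes t = n}"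
  by (rule finite_subset[OF _ fin_le[of n]]) auto

definition LS :: "ptree set \<Rightarrow> nat \<Rightarrow> ptree list set" where
  "LS S n = {ts. set ts \<subseteq> S \<and> sum_list (map nodes ts) = n}"

lemma fin_LS: "finite (LS S n)"
proof (rule finite_subset[OF _ finite_lists_length_le[OF fin_le[of n], of n]])
  show "LS S n \<subseteq> {xs. set xs \<subseteq> {t. nodes t \<le> n} \<and> length xs \<le> n}"
    unfolding LS_def using member_le_sum_list[of _ "map nodes _"] length_le_sum by fastforce
qed

lemma LS0: "LS S 0 = {[]}"
  unfolding LS_def by (auto simp: sum_list_eq_0_iff)

lemma LS_rec:
  assumes n: "n > 0"
  shows "card (LS S n) = (\<Sum>j=0..n. card {t \<in> S. nodes t = j} * card (LS S (n-j)))"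
proof -
  let ?A = "SIGMA j:{0..n}. {t \<in> S. nodes t = j} \<times> LS S (n-j)"
  let ?f = "\<lambda>(j::nat, t, ts). t # ts"
  have inj: "inj_on ?f ?A" by (auto simp: inj_on_def)
  have img: "?f ` ?A = LS S n"
  proof
    show "?f ` ?A \<subseteq> LS S n" by (auto simp: LS_def)
    show "LS S n \<subseteq> ?f ` ?A"
    proof
      fix xs assume xs: "xs \<in> LS S n"
      then obtain t ts where e: "xs = t # ts" using n by (cases xs) (auto simp: LS_def)
      have "(nodes t, t, ts) \<in> ?A" using xs e by (auto simp: LS_def)
      then show "xs \<in> ?f ` ?A" using e by force
    qed
  qed
  have "card (LS S n) = card ?A" using card_image[OF inj] img by simp
  also have "\<dots> = (\<Sum>j=0..n. card ({t \<in> S. nodes t = j} \<times> LS S (n-j)))"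
    by (rule card_SigmaI) (auto simp: fin_eq fin_LS)
  also have "\<dots> = (\<Sum>j=0..n. card {t \<in> S. nodes t = j} * card (LS S (n-j)))"
    by (simp add: card_cartesian_product)
  finally show ?thesis .
qed

definition gf :: "ptree set \<Rightarrow> real fps" where
  "gf S = Abs_fps (\<lambda>n. real (card {t \<in> S. nodes t = n}))"
definition Lgf :: "ptree set \<Rightarrow> real fps" where
  "Lgf S = Abs_fps (\<lambda>n. real (card (LS S n)))"

lemma gf0[simp]: "gf S $ 0 = 0"
  unfolding gf_def by simp

lemma Lgf_eq: "Lgf S = 1 + gf S * Lgf S"
proof (rule fps_ext)
  fix n show "Lgf S $ n = (1 + gf S * Lgf S) $ n"
  proof (cases "n = 0")
    case True then show ?thesis by (simp add: Lgf_def LS0)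
  next
    case False
    then show ?thesis
      by (simp add: Lgf_def gf_def fps_mult_nth LS_rec[of n S] of_nat_sum)
  qed
qed

lemma Lgf_fls: "fps_to_fls (Lgf S) = 1 / (1 - fps_to_fls (gf S))"
proof -
  have "(1 - gf S) * Lgf S = 1" using Lgf_eq[of S] by (simp add: algebra_simps)
  hence "(1 - fps_to_fls (gf S)) * fps_to_fls (Lgf S) = 1"
    by (metis fls_times_fps_to_fls fps_to_fls_minus fps_to_fls_eq_1_iff)
  moreover have "1 - fps_to_fls (gf S) \<noteq> 0" using phi_nz[of "1 - gf S"] by simp
  ultimately show ?thesis by (simp add: field_simps)
qed

lemma ol_SS: "odd_leaves (Suc (Suc d)) t = odd_leaves d t"
proof (induction d t rule: odd_leaves.induct)
  case (1 d ts)
  then show ?case by (auto simp: list_all_iff)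
qed

lemma ol1_Node: "odd_leaves (Suc 0) (Node ts) = (\<forall>t\<in>set ts. odd_leaves 0 t)"
  by (auto simp: list_all_iff ol_SS)

lemma ol0_Node: "odd_leaves 0 (Node ts) = (ts \<noteq> [] \<and> (\<forall>t\<in>set ts. odd_leaves (Suc 0) t))"
  by (auto simp: list_all_iff)

lemma height_Node_le: "height (Node ts) \<le> Suc h \<longleftrightarrow> (\<forall>t\<in>set ts. height t \<le> h)"
  by (cases "ts = []") (auto simp: Max_le_iff)

definition Ev :: "nat \<Rightarrow> ptree set" where "Ev h = {t. odd_leaves 0 t \<and> height t \<le> h}"
definition Od :: "nat \<Rightarrow> ptree set" where "Od h = {t. odd_leaves (Suc 0) t \<and> height t \<le> h}"

lemma nodes_Node_Suc: "nodes (Node ts) = Suc n \<longleftrightarrow> sum_list (map nodes ts) = n" by simp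

lemma Od_S: "{t \<in> Od (Suc h). nodes t = Suc n} = Node ` LS (Ev h) n"
proof
  show "{t \<in> Od (Suc h). nodes t = Suc n} \<subseteq> Node ` LS (Ev h) n"
  proof
    fix t assume a: "t \<in> {t \<in> Od (Suc h). nodes t = Suc n}"
    obtain ts where t: "t = Node ts" by (cases t)
    have "ts \<in> LS (Ev h) n" using a unfolding t Od_def LS_def Ev_def
      by (auto simp: ol1_Node height_Node_le simp del: odd_leaves.simps height.simps)
    then show "t \<in> Node ` LS (Ev h) n" using t by blast
  qed
  show "Node ` LS (Ev h) n \<subseteq> {t \<in> Od (Suc h). nodes t = Suc n}"
    unfolding Od_def LS_def Ev_def by (auto simp: ol1_Node height_Node_le simp del: odd_leaves.simps height.simps)
qed

lemma Ev_S: "{t \<in> Ev (Suc h). nodes t = Suc n} = Node ` (LS (Od h) n - {[]})"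
proof
  show "{t \<in> Ev (Suc h). nodes t = Suc n} \<subseteq> Node ` (LS (Od h) n - {[]})"
  proof
    fix t assume a: "t \<in> {t \<in> Ev (Suc h). nodes t = Suc n}"
    obtain ts where t: "t = Node ts" by (cases t)
    have "ts \<in> LS (Od h) n - {[]}" using a unfolding t Od_def LS_def Ev_def
      by (auto simp: ol0_Node height_Node_le simp del: odd_leaves.simps height.simps)
    then show "t \<in> Node ` (LS (Od h) n - {[]})" using t by blast
  qed
  show "Node ` (LS (Od h) n - {[]}) \<subseteq> {t \<in> Ev (Suc h). nodes t = Suc n}"
    unfolding Od_def LS_def Ev_def by (auto simp: ol0_Node height_Node_le simp del: odd_leaves.simps height.simps)
qed

lemma inj_Node: "inj_on Node A" by (auto simp: inj_on_def)

lemma gf_Od: "gf (Od (Suc h)) = fps_X * Lgf (Ev h)"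
proof (rule fps_ext)
  fix n show "gf (Od (Suc h)) $ n = (fps_X * Lgf (Ev h)) $ n"
  proof (cases n)
    case (Suc m)
    then show ?thesis unfolding gf_def Lgf_def
      by (simp add: Od_S card_image[OF inj_Node])
  qed simp
qed

lemma gf_Ev: "gf (Ev (Suc h)) = fps_X * (Lgf (Od h) - 1)"
proof (rule fps_ext)
  fix n show "gf (Ev (Suc h)) $ n = (fps_X * (Lgf (Od h) - 1)) $ n"
  proof (cases n)
    case (Suc m)
    have "card (LS (Od h) m - {[]}) = card (LS (Od h) m) - (if m = 0 then 1 else 0)"
    proof (cases "m = 0")
      case True then show ?thesis by (simp add: LS0)
    next
      case False
      then have "[] \<notin> LS (Od h) m" by (auto simp: LS_def)
      then show ?thesis using False by simp
    qed
    moreover have "card (LS (Od h) m) \<ge> (if m = 0 then 1 else 0)" by (simp add: LS0)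
    ultimately show ?thesis unfolding gf_def Lgf_def using Suc
      by (simp add: Ev_S card_image[OF inj_Node] of_nat_diff)
  qed simp
qed

lemma gf_Od0: "gf (Od 0) = fps_X"
proof (rule fps_ext)
  fix n
  have "{t \<in> Od 0. nodes t = n} = (if n = 1 then {Node []} else {})"
  proof -
    have "t \<in> Od 0 \<longleftrightarrow> t = Node []" for t
    proof (cases t)
      case (Node ts) then show ?thesis unfolding Od_def by (cases "ts = []") auto
    qed
    then show ?thesis by auto
  qed
  then show "gf (Od 0) $ n = fps_X $ n" unfolding gf_def by (simp add: fps_X_def)
qed

lemma chain: "Gser (Suc m) = gf (Od (2*m)) \<and> Fser (Suc m) = gf (Ev (2*m+1))"
proof (induction m)
  case 0
  have g: "Gser (Suc 0) = gf (Od (2*0))" by (simp add: gf_Od0)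
  moreover have "Fser (Suc 0) = gf (Ev (2*0+1))"
  proof -
    let ?G = "fps_to_fls (gf (Od 0))"
    have nz: "1 - ?G \<noteq> 0" using phi_nz[of "1 - gf (Od 0)"] by simp
    have "fps_to_fls (gf (Ev (2*0+1))) = fps_to_fls fps_X * (1 / (1 - ?G) - 1)"
      by (simp add: gf_Ev Lgf_fls fls_times_fps_to_fls)
    also have "\<dots> = fps_to_fls fps_X * ?G / (1 - ?G)" using nz by (simp add: field_simps)
    also have "\<dots> = fps_to_fls (Fser (Suc 0))" using F_from_G[of 0] g by simp
    finally show ?thesis by simp
  qed
  ultimately show ?case by simp
next
  case (Suc m)
  have g: "Gser (Suc (Suc m)) = gf (Od (2*Suc m))"
  proof -
    let ?E = "fps_to_fls (gf (Ev (2*m+1)))"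
    have nz: "1 - ?E \<noteq> 0" using phi_nz[of "1 - gf (Ev (2*m+1))"] by simp
    have "fps_to_fls (Gser (Suc (Suc m))) = fps_to_fls fps_X / (1 - ?E)"
      unfolding Gser_SS using Suc.IH by (subst phi_div) simp_all
    also have "\<dots> = fps_to_fls fps_X * (1 / (1 - ?E))" by simp
    also have "\<dots> = fps_to_fls (gf (Od (2*Suc m)))"
      using gf_Od[of "2*m+1"] by (simp add: Lgf_fls fls_times_fps_to_fls)
    finally show ?thesis by simp
  qed
  moreover have "Fser (Suc (Suc m)) = gf (Ev (2*Suc m+1))"
  proof -
    let ?G = "fps_to_fls (gf (Od (2*Suc m)))"
    have nz: "1 - ?G \<noteq> 0" using phi_nz[of "1 - gf (Od (2*Suc m))"] by simp
    have "fps_to_fls (gf (Ev (2*Suc m+1))) = fps_to_fls fps_X * (1 / (1 - ?G) - 1)"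
      by (simp add: gf_Ev Lgf_fls fls_times_fps_to_fls)
    also have "\<dots> = fps_to_fls fps_X * ?G / (1 - ?G)" using nz by (simp add: field_simps)
    also have "\<dots> = fps_to_fls (Fser (Suc (Suc m)))" using F_from_G[of "Suc m"] g by simp
    finally show ?thesis by simp
  qed
  ultimately show ?case by simp
qed

lemma ol0_nodes: "odd_leaves 0 t \<Longrightarrow> 2 \<le> nodes t"
proof (cases t)
  case (Node ts)
  assume "odd_leaves 0 t"
  then have "ts \<noteq> []" using Node by auto
  then have "1 \<le> length ts" by (cases ts) auto
  then show ?thesis using Node length_le_sum[of ts] by simp
qed

theorem mainTheorem2:
  fixes k :: nat
  assumes "k \<ge> 1"
  shows "Gser k = (vser / (1 + vser)) * ((1 - vser ^ (2*k)) / (1 - vser ^ (2*k+1)))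
       \<and> Fser k = (vser\<^sup>2 / (1 + vser + vser\<^sup>2)) * ((1 - vser ^ (2*k)) / (1 - vser ^ (2*k+2)))
       \<and> Fser k = Abs_fps (\<lambda>n. real (card {t. nodes t = n \<and> 2 \<le> nodes t \<and> odd_leaves 0 t
                                                \<and> height t \<le> 2*k - 1}))"
proof -
  obtain m where k: "k = Suc m" using assms by (cases k) auto
  have s: "{t. nodes t = n \<and> 2 \<le> nodes t \<and> odd_leaves 0 t \<and> height t \<le> 2*k - 1}
         = {t \<in> Ev (2*m+1). nodes t = n}" for n
    unfolding Ev_def k using ol0_nodes by auto
  have "Fser k = Abs_fps (\<lambda>n. real (card {t. nodes t = n \<and> 2 \<le> nodes t \<and> odd_leaves 0 t
                                                \<and> height t \<le> 2*k - 1}))"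
    unfolding s using chain[of m] k by (simp add: gf_def)
  then show ?thesis using G_formula[of m] F_formula[of m] k by simp
qed

end
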